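(* Let $R\ge1$ and let $\mathbb{G}_1,\dots,\mathbb{G}_R$ be linear arrays whose difference coarrays $\mathbb{D}_{\mathbb{G}_1},\dots,\mathbb{D}_{\mathbb{G}_R}$ are all hole-free. Let $\mathbb{M}_r$ ($0\le r\le R$) be the multi-generator fractal array built from them. Then for every $1\le r\le R$ the difference coarray $\mathbb{D}_r$ of $\mathbb{M}_r$ is hole-free and $$\mathbb{D}_r=\left[-\tfrac{P_r-1}{2},\tfrac{P_r-1}{2}\right]\cap\mathbb{Z},\qquad P_r=\prod_{i=1}^r|\mathbb{D}_{\mathbb{G}_i}|.$$
   Context: A linear array is a finite set $\mathbb{G}\subset\mathbb{Z}$ with $\min\mathbb{G}=0$; its difference coarray is $\mathbb{D}=\{n_1-n_2:n_1,n_2\in\mathbb{G}\}$; its central ULA is the largest set $\{-m,\dots,m\}$ ($m\ge0$) contained in $\mathbb{D}$; $\mathbb{D}$ is hole-free if it equals its central ULA. Given generators $\mathbb{G}_1,\dots,\mathbb{G}_R$ with central ULAs $\mathbb{U}_{\mathbb{G}_i}$, the multi-generator fractal array is defined by $\mathbb{M}_0=\{0\}$ and $\mathbb{M}_{r+1}=\bigcup_{n\in\mathbb{G}_{r+1}}\big(\mathbb{M}_r+n\prod_{i=1}^{r}|\mathbb{U}_{\mathbb{G}_i}|\big)$ for $0\le r\le R-1$ (empty product $=1$), where $A+t=\{a+t:a\in A\}$. *)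

theory Defs
  imports Main
begin

definition linear_array :: "int set \<Rightarrow> bool" where
  "linear_array G \<longleftrightarrow> finite G \<and> G \<noteq> {} \<and> Min G = 0"

definition diff_coarray :: "int set \<Rightarrow> int set" where
  "diff_coarray G = {n1 - n2 | n1 n2. n1 \<in> G \<and> n2 \<in> G}"

definition central_ula :: "int set \<Rightarrow> int set" where
  "central_ula D = {- int (GREATEST m::nat. {- int m..int m} \<subseteq> D) .. int (GREATEST m::nat. {- int m..int m} \<subseteq> D)}"

definition hole_free :: "int set \<Rightarrow> bool" where
  "hole_free D \<longleftrightarrow> D = central_ula D"

definition shift :: "int set \<Rightarrow> int \<Rightarrow> int set" where
  "shift A t = (\<lambda>a. a + t) ` A"

fun fractal :: "(nat \<Rightarrow> int set) \<Rightarrow> nat \<Rightarrow> int set" where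
  "fractal G 0 = {0}"
| "fractal G (Suc r) =
     (\<Union>n\<in>G (Suc r). shift (fractal G r)
        (n * (\<Prod>i=1..r. int (card (central_ula (diff_coarray (G i)))))))"

end

theory Submission
  imports Defs
begin

lemma diff_step:
  fixes G M :: "int set" and m h :: int
  assumes DG: "diff_coarray G = {-m..m}" and DM: "diff_coarray M = {-h..h}"
    and h0: "h \<ge> 0"
  shows "diff_coarray (\<Union>n\<in>G. shift M (n * (2*h+1))) = {-(h + m*(2*h+1))..h + m*(2*h+1)}"
proof -
  let ?P = "2*h+1"
  have P0: "?P > 0" using h0 by simp
  show ?thesis
  proof
    show "diff_coarray (\<Union>n\<in>G. shift M (n * ?P)) \<subseteq> {-(h + m*?P)..h + m*?P}"
    proof
      fix x assume "x \<in> diff_coarray (\<Union>n\<in>G. shift M (n * ?P))"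
      then obtain n1 n2 a b where n1: "n1 \<in> G" and n2: "n2 \<in> G" and a: "a \<in> M" and b: "b \<in> M"
        and x: "x = (a + n1 * ?P) - (b + n2 * ?P)"
        unfolding diff_coarray_def shift_def by blast
      have "n1 - n2 \<in> diff_coarray G" using n1 n2 unfolding diff_coarray_def by blast
      hence q: "-m \<le> n1 - n2" "n1 - n2 \<le> m" using DG by auto
      have "a - b \<in> diff_coarray M" using a b unfolding diff_coarray_def by blast
      hence s: "-h \<le> a - b" "a - b \<le> h" using DM by auto
      have xe: "x = (a - b) + (n1 - n2) * ?P" using x by (simp add: algebra_simps)
      have u1: "(n1 - n2) * ?P \<le> m * ?P" using q P0 by (intro mult_right_mono) auto
      have u2: "-m * ?P \<le> (n1 - n2) * ?P" using q P0 by (intro mult_right_mono) auto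
      have "-(h + m*?P) \<le> x" "x \<le> h + m*?P" using u1 u2 xe s by linarith+
      then show "x \<in> {-(h + m*?P)..h + m*?P}" by simp
    qed
  next
    show "{-(h + m*?P)..h + m*?P} \<subseteq> diff_coarray (\<Union>n\<in>G. shift M (n * ?P))"
    proof
      fix x assume xr: "x \<in> {-(h + m*?P)..h + m*?P}"
      define q where "q = (x + h) div ?P"
      define r where "r = (x + h) mod ?P"
      have dm: "x + h = q * ?P + r" unfolding q_def r_def by (rule div_mult_mod_eq[symmetric])
      have r0: "0 \<le> r" "r < ?P" unfolding r_def using pos_mod_bound[OF P0] pos_mod_sign[OF P0] by auto
      define s where "s = r - h"
      have xe: "x = s + q * ?P" using dm unfolding s_def by simp
      have sr: "-h \<le> s" "s \<le> h" unfolding s_def using r0 by auto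
      have "-m * ?P < (q+1) * ?P" using xr dm r0 by (simp add: algebra_simps)
      hence "-m < q+1" using mult_less_cancel_right_pos[OF P0] by blast
      hence q1: "-m \<le> q" by simp
      have "q * ?P < (m+1) * ?P" using xr dm r0 by (simp add: algebra_simps)
      hence "q < m+1" using mult_less_cancel_right_pos[OF P0] by blast
      hence q2: "q \<le> m" by simp
      have "q \<in> diff_coarray G" using DG q1 q2 by auto
      then obtain n1 n2 where n: "n1 \<in> G" "n2 \<in> G" "q = n1 - n2" unfolding diff_coarray_def by blast
      have "s \<in> diff_coarray M" using DM sr by auto
      then obtain a b where ab: "a \<in> M" "b \<in> M" "s = a - b" unfolding diff_coarray_def by blast
      have "a + n1 * ?P \<in> (\<Union>n\<in>G. shift M (n * ?P))" using n ab unfolding shift_def by blast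
      moreover have "b + n2 * ?P \<in> (\<Union>n\<in>G. shift M (n * ?P))" using n ab unfolding shift_def by blast
      moreover have "x = (a + n1 * ?P) - (b + n2 * ?P)" using xe n ab by (simp add: algebra_simps)
      ultimately show "x \<in> diff_coarray (\<Union>n\<in>G. shift M (n * ?P))" unfolding diff_coarray_def by blast
    qed
  qed
qed

lemma hf_interval:
  fixes h :: int assumes "h \<ge> 0"
  shows "hole_free {-h..h}"
proof -
  have g: "(GREATEST m::nat. {- int m..int m} \<subseteq> {-h..h}) = nat h"
  proof (rule Greatest_equality)
    show "{- int (nat h)..int (nat h)} \<subseteq> {-h..h}" using assms by simp
  next
    fix y :: nat assume "{- int y..int y} \<subseteq> {-h..h}"
    hence "int y \<in> {-h..h}" by auto
    thus "y \<le> nat h" by auto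
  qed
  show ?thesis unfolding hole_free_def central_ula_def g using assms by simp
qed

theorem theorem8:
  fixes G :: "nat \<Rightarrow> int set" and R :: nat
  assumes "R \<ge> 1"
    and "\<And>i. 1 \<le> i \<Longrightarrow> i \<le> R \<Longrightarrow> linear_array (G i)"
    and "\<And>i. 1 \<le> i \<Longrightarrow> i \<le> R \<Longrightarrow> hole_free (diff_coarray (G i))"
  shows "\<forall>r. 1 \<le> r \<and> r \<le> R \<longrightarrow>
           hole_free (diff_coarray (fractal G r)) \<and>
           (let P = (\<Prod>i=1..r. int (card (diff_coarray (G i))))
            in diff_coarray (fractal G r) = {x. - (P - 1) \<le> 2 * x \<and> 2 * x \<le> P - 1})"
proof -
  define k where "k i = int (GREATEST m::nat. {- int m..int m} \<subseteq> diff_coarray (G i))" for i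
  have k0: "k i \<ge> 0" for i unfolding k_def by simp
  have Dk: "diff_coarray (G i) = {-k i..k i}" if "1 \<le> i" "i \<le> R" for i
    using assms(3)[OF that] unfolding hole_free_def central_ula_def k_def by simp
  have CU: "central_ula (diff_coarray (G i)) = diff_coarray (G i)" if "1 \<le> i" "i \<le> R" for i
    using assms(3)[OF that] unfolding hole_free_def by simp
  have cardD: "int (card (diff_coarray (G i))) = 2 * k i + 1" if "1 \<le> i" "i \<le> R" for i
    using Dk[OF that] k0[of i] by simp
  have main: "r \<le> R \<Longrightarrow> \<exists>h\<ge>0. diff_coarray (fractal G r) = {-h..h} \<and>
        (\<Prod>i=1..r. int (card (diff_coarray (G i)))) = 2*h+1" for r
  proof (induction r)
    case 0
    have "diff_coarray {0::int} = {0}" unfolding diff_coarray_def by auto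
    thus ?case by simp
  next
    case (Suc r)
    then obtain h where h0: "h \<ge> 0" and hD: "diff_coarray (fractal G r) = {-h..h}"
      and hP: "(\<Prod>i=1..r. int (card (diff_coarray (G i)))) = 2*h+1" by auto
    have PC: "(\<Prod>i=1..r. int (card (central_ula (diff_coarray (G i))))) = 2*h+1"
      proof -
      have "(\<Prod>i=1..r. int (card (central_ula (diff_coarray (G i))))) = (\<Prod>i=1..r. int (card (diff_coarray (G i))))"
        by (rule prod.cong) (use CU Suc.prems in auto)
      thus ?thesis using hP by simp
    qed
    have F: "fractal G (Suc r) = (\<Union>n\<in>G (Suc r). shift (fractal G r) (n * (2*h+1)))"
      unfolding fractal.simps PC ..
    have step: "diff_coarray (fractal G (Suc r)) = {-(h + k (Suc r)*(2*h+1))..h + k (Suc r)*(2*h+1)}"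
      unfolding F by (rule diff_step[OF Dk hD h0]) (use Suc.prems in auto)
    have "(\<Prod>i=1..Suc r. int (card (diff_coarray (G i)))) = (2 * k (Suc r) + 1) * (2*h+1)"
      proof -
      have "(\<Prod>i=1..Suc r. int (card (diff_coarray (G i)))) = int (card (diff_coarray (G (Suc r)))) * (\<Prod>i=1..r. int (card (diff_coarray (G i))))"
        by (rule prod.nat_ivl_Suc') simp
      also have "\<dots> = (2 * k (Suc r) + 1) * (2*h+1)" using hP cardD[of "Suc r"] Suc.prems by simp
      finally show ?thesis .
    qed
    also have "\<dots> = 2 * (h + k (Suc r)*(2*h+1)) + 1" by (simp add: algebra_simps)
    finally show ?case using step h0 k0[of "Suc r"]
      by (intro exI[of _ "h + k (Suc r)*(2*h+1)"]) simp
  qed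
  show ?thesis
  proof (intro allI impI)
    fix r assume r: "1 \<le> r \<and> r \<le> R"
    then obtain h where h0: "h \<ge> 0" and hD: "diff_coarray (fractal G r) = {-h..h}"
      and hP: "(\<Prod>i=1..r. int (card (diff_coarray (G i)))) = 2*h+1" using main by blast
    have "{x. - (2*h+1 - 1) \<le> 2 * x \<and> 2 * x \<le> 2*h+1 - 1} = {-h..h}" by auto
    thus "hole_free (diff_coarray (fractal G r)) \<and>
           (let P = (\<Prod>i=1..r. int (card (diff_coarray (G i))))
            in diff_coarray (fractal G r) = {x. - (P - 1) \<le> 2 * x \<and> 2 * x \<le> P - 1})"
      using hf_interval[OF h0] hD hP by simp
  qed
qed

end
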